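(* For every prime $p$, every integer $t\ge 1$ and every integer $k$ with $1\le k\le p^t$, \[ \overline{M}_k(p^t)=\sum_{j=1}^{p^t} f_k\!\left(\left\lfloor \frac{p^t}{j}\right\rfloor\right)-\sum_{j=1}^{p^{t-1}} f_k\!\left(\left\lfloor \frac{p^{t-1}}{j}\right\rfloor\right)+(p-1)\sum_{s=1}^{t}p^{s-1}\sum_{m=1}^{p^{t-s}} f_k\!\left(\left\lfloor \frac{p^t}{1+(m-1)p^s}\right\rfloor\right). \]
   Context: For a nonempty finite set $A$ of positive integers, $(A)$ denotes the greatest common divisor of the elements of $A$. For $m,k\in\mathbb{N}$, $f_k(m)$ is the number of $k$-element subsets $A\subseteq\{1,2,\ldots,m\}$ with $(A)=1$ (so $f_k(m)=0$ if $m<k$). For $1\le k\le n$, \[ \overline{M}_k(n)=\sum_{\substack{A\subseteq\{1,\ldots,n\},\ \#A=k\\ \gcd((A),n)=1}}\gcd((A)-1,n), \] with the convention $\gcd(0,n)=n$. *)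

theory Defs
  imports "HOL-Computational_Algebra.Primes"
begin

definition f :: "nat \<Rightarrow> nat \<Rightarrow> nat" where
  "f k m = card {A. A \<subseteq> {1..m} \<and> card A = k \<and> Gcd A = 1}"

text \<open>Mbar k n: sum over k-subsets A of {1..n} with gcd(Gcd A, n) = 1 of gcd(Gcd A - 1, n).
  Since Gcd A \<ge> 1 for nonempty A, the natural-number subtraction is exact; gcd 0 n = n.\<close>
definition Mbar :: "nat \<Rightarrow> nat \<Rightarrow> nat" where
  "Mbar k n = (\<Sum>A\<in>{A. A \<subseteq> {1..n} \<and> card A = k \<and> coprime (Gcd A) n}. gcd (Gcd A - 1) n)"

end

theory Submission
  imports Defs
begin

lemma card_gcd_eq:
  assumes d: "d \<ge> 1"
  shows "card {A. A \<subseteq> {1..n} \<and> card A = k \<and> Gcd A = d} = f k (n div d)"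
proof -
  let ?B = "{B. B \<subseteq> {1..n div d} \<and> card B = k \<and> Gcd B = (1::nat)}"
  let ?A = "{A. A \<subseteq> {1..n} \<and> card A = k \<and> Gcd A = d}"
  have "bij_betw (\<lambda>B. (*) d ` B) ?B ?A"
  proof (rule bij_betw_byWitness[where f'="\<lambda>A. (\<lambda>x. x div d) ` A"])
    show "\<forall>a\<in>?B. (\<lambda>x. x div d) ` (*) d ` a = a" using d by (auto simp: image_image)
    show "\<forall>a'\<in>?A. (*) d ` (\<lambda>x. x div d) ` a' = a'"
    proof
      fix A assume "A \<in> ?A"
      then have dv: "\<And>x. x \<in> A \<Longrightarrow> d dvd x" by (metis (mono_tags) Gcd_dvd mem_Collect_eq)
      show "(*) d ` (\<lambda>x. x div d) ` A = A"
        unfolding image_image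
      proof (rule set_eqI, rule iffI)
        fix x assume "x \<in> (\<lambda>x. d * (x div d)) ` A"
        then show "x \<in> A" using dv by auto
      next
        fix x assume "x \<in> A" then show "x \<in> (\<lambda>x. d * (x div d)) ` A"
          using dv[of x] by (metis dvd_mult_div_cancel image_eqI)
      qed
    qed
    show "(\<lambda>B. (*) d ` B) ` ?B \<subseteq> ?A"
    proof
      fix X assume "X \<in> (\<lambda>B. (*) d ` B) ` ?B"
      then obtain B where B: "B \<in> ?B" and X: "X = (*) d ` B" by blast
      have "X \<subseteq> {1..n}"
      proof
        fix x assume "x \<in> X"
        then obtain y where y: "y \<in> B" "x = d * y" using X by blast
        then have "1 \<le> y" "y \<le> n div d" using B by auto
        then have "d * y \<le> d * (n div d)" by simp
        also have "\<dots> \<le> n" by simp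
        finally show "x \<in> {1..n}" using y \<open>1 \<le> y\<close> d by simp
      qed
      moreover have "card X = k" using B X d by (simp add: card_image inj_on_def)
      moreover have "Gcd X = d" using B X by (simp add: Gcd_mult)
      ultimately show "X \<in> ?A" by blast
    qed
    show "(\<lambda>A. (\<lambda>x. x div d) ` A) ` ?A \<subseteq> ?B"
    proof
      fix Y assume "Y \<in> (\<lambda>A. (\<lambda>x. x div d) ` A) ` ?A"
      then obtain A where A: "A \<in> ?A" and Y: "Y = (\<lambda>x. x div d) ` A" by blast
      have dv: "\<And>x. x \<in> A \<Longrightarrow> d dvd x" using A by (metis (mono_tags) Gcd_dvd mem_Collect_eq)
      have "Y \<subseteq> {1..n div d}"
      proof
        fix y assume "y \<in> Y"
        then obtain x where x: "x \<in> A" "y = x div d" using Y by blast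
        then have "1 \<le> x" "x \<le> n" using A by auto
        then have "1 \<le> x div d" using dv[OF x(1)] d
          by (metis dvd_div_eq_0_iff less_one linorder_not_le not_one_le_zero)
        moreover have "x div d \<le> n div d" using \<open>x \<le> n\<close> by (simp add: div_le_mono)
        ultimately show "y \<in> {1..n div d}" using x by simp
      qed
      moreover have "inj_on (\<lambda>x. x div d) A"
        by (rule inj_onI) (metis dv dvd_div_mult_self)
      then have "card Y = k" using A Y by (simp add: card_image)
      moreover have "(*) d ` Y = A" using Y dv
      proof -
        have "(*) d ` Y = (\<lambda>x. d * (x div d)) ` A" using Y by (simp add: image_image)
        also have "\<dots> = (\<lambda>x. x) ` A" using dv by (intro image_cong) (simp_all add: dvd_mult_div_cancel)
        also have "\<dots> = A" by simp
        finally show ?thesis .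
      qed
      then have g1: "Gcd ((*) d ` Y) = d" using A by simp
      have g2: "Gcd ((*) d ` Y) = d * Gcd Y" by (simp add: Gcd_mult)
      from g1 g2 have "d * Gcd Y = d" by simp
      then have "Gcd Y = 1" using d by simp
      ultimately show "Y \<in> ?B" by blast
    qed
  qed
  from bij_betw_same_card[OF this] show ?thesis unfolding f_def by simp
qed


lemma sum_by_gcd:
  fixes g :: "nat \<Rightarrow> int"
  assumes k: "k \<ge> 1"
  shows "(\<Sum>A\<in>{A. A \<subseteq> {1..n} \<and> card A = k}. g (Gcd A)) = (\<Sum>d=1..n. g d * int (f k (n div d)))"
proof -
  let ?S = "{A. A \<subseteq> {1..n} \<and> card A = k}"
  have fin: "finite ?S" by (rule finite_subset[of _ "Pow {1..n}"]) auto
  have img: "Gcd ` ?S \<subseteq> {1..n}"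
  proof
    fix x assume "x \<in> Gcd ` ?S"
    then obtain A where A: "A \<subseteq> {1..n}" "card A = k" "x = Gcd A" by blast
    then have "A \<noteq> {}" using k by auto
    then obtain a where a: "a \<in> A" by blast
    then have "x dvd a" using A by simp
    moreover have "1 \<le> a" "a \<le> n" using a A by auto
    ultimately have "x \<le> a" "x \<noteq> 0" by (auto intro: dvd_imp_le)
    then show "x \<in> {1..n}" using \<open>a \<le> n\<close> by simp
  qed
  have "(\<Sum>A\<in>?S. g (Gcd A)) = (\<Sum>d=1..n. \<Sum>A\<in>{A \<in> ?S. Gcd A = d}. g (Gcd A))"
    by (rule sum.group[OF fin _ img, symmetric]) simp
  also have "\<dots> = (\<Sum>d=1..n. g d * int (f k (n div d)))"
  proof (rule sum.cong[OF refl])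
    fix d assume "d \<in> {1..n}"
    then have "(\<Sum>A\<in>{A \<in> ?S. Gcd A = d}. g (Gcd A)) = (\<Sum>A\<in>{A \<in> ?S. Gcd A = d}. g d)"
      by simp
    also have "\<dots> = g d * int (card {A \<in> ?S. Gcd A = d})" by simp
    also have se: "{A \<in> ?S. Gcd A = d} = {A. A \<subseteq> {1..n} \<and> card A = k \<and> Gcd A = d}" by auto
    have "card {A \<in> ?S. Gcd A = d} = f k (n div d)" unfolding se using \<open>d \<in> {1..n}\<close> by (intro card_gcd_eq) simp
    then have "g d * int (card {A \<in> ?S. Gcd A = d}) = g d * int (f k (n div d))" by simp
    finally show "(\<Sum>A\<in>{A \<in> ?S. Gcd A = d}. g (Gcd A)) = g d * int (f k (n div d))" .
  qed
  finally show ?thesis .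
qed

lemma gcd_primepow:
  fixes p x :: nat
  assumes p: "prime p"
  shows "int (gcd x (p ^ t)) = 1 + int (p - 1) * (\<Sum>s=1..t. int (p ^ (s - 1)) * (if p ^ s dvd x then 1 else 0))"
proof (induction t)
  case 0 then show ?case by simp
next
  case (Suc t)
  have p1: "p \<ge> 1" using p prime_ge_1_nat by blast
  define S where "S = (\<Sum>s=1..t. int (p ^ (s - 1)) * (if p ^ s dvd x then 1 else 0))"
  have split: "(\<Sum>s=1..Suc t. int (p ^ (s - 1)) * (if p ^ s dvd x then 1 else 0))
     = S + int (p ^ t) * (if p ^ Suc t dvd x then 1 else 0)" unfolding S_def by (simp add: sum.cl_ivl_Suc)
  have IH: "int (gcd x (p ^ t)) = 1 + int (p - 1) * S" using Suc unfolding S_def .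
  show ?case
  proof (cases "p ^ Suc t dvd x")
    case True
    then have "p ^ t dvd x" using dvd_trans[OF le_imp_power_dvd[of t "Suc t"]] by simp
    then have "gcd x (p ^ t) = p ^ t" by (simp add: gcd_nat.absorb2)
    moreover have "gcd x (p ^ Suc t) = p ^ Suc t" using True by (simp add: gcd_nat.absorb2)
    moreover have "int (p ^ Suc t) = int (p ^ t) + int (p - 1) * int (p ^ t)"
      using p1 by (simp add: of_nat_diff algebra_simps)
    ultimately have e: "int (gcd x (p ^ Suc t)) = (1 + int (p - 1) * S) + int (p - 1) * int (p ^ t)"
      using IH by simp
    show ?thesis unfolding e split using True by (simp only: if_True mult_1_right distrib_left add.assoc)
  next
    case False
    have "gcd x (p ^ Suc t) = gcd x (p ^ t)"
    proof (rule dvd_antisym)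
      have "gcd x (p ^ Suc t) dvd p ^ Suc t" by simp
      then obtain i where i: "i \<le> Suc t" "gcd x (p ^ Suc t) = p ^ i"
        using divides_primepow_nat[OF p] by blast
      have "i \<noteq> Suc t" using False i by (metis gcd_dvd1)
      then have "i \<le> t" using i by simp
      then have "gcd x (p ^ Suc t) dvd p ^ t" using i by (simp add: le_imp_power_dvd)
      then show "gcd x (p ^ Suc t) dvd gcd x (p ^ t)" by simp
      show "gcd x (p ^ t) dvd gcd x (p ^ Suc t)"
        using dvd_trans[OF gcd_dvd2[of x "p ^ t"] le_imp_power_dvd[of t "Suc t" p]] by simp
    qed
    then show ?thesis unfolding split using IH False by simp
  qed
qed


lemma h_decomp:
  fixes p t d :: nat
  assumes p: "prime p" and t: "t \<ge> 1" and d: "d \<ge> 1"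
  shows "int (if coprime d (p ^ t) then gcd (d - 1) (p ^ t) else 0) =
    (if p dvd d then 0 else 1) + int (p - 1) * (\<Sum>s=1..t. int (p ^ (s - 1)) * (if p ^ s dvd (d - 1) then 1 else 0))"
proof (cases "p dvd d")
  case True
  have "\<not> coprime d (p ^ t)"
  proof
    assume c: "coprime d (p ^ t)"
    have "p dvd p ^ t" using t by (simp add: dvd_power)
    then have "is_unit p" using coprime_common_divisor[OF c True] by blast
    then show False using p by simp
  qed
  moreover have "\<not> p ^ s dvd (d - 1)" if "s \<ge> 1" for s
  proof
    assume "p ^ s dvd (d - 1)"
    then have "p dvd (d - 1)" using that dvd_trans[OF dvd_power[of s p]] by simp
    with True have "p dvd d - (d - 1)" by (simp add: dvd_diff_nat)
    then have "p dvd 1" using d by simp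
    then show False using p by simp
  qed
  ultimately show ?thesis using True by simp
next
  case False
  then have "coprime d (p ^ t)" using p
    using prime_imp_coprime[OF p False] by (simp add: coprime_commute)
  then show ?thesis using False gcd_primepow[OF p, of "d - 1" t] by simp
qed


lemma img_mult:
  fixes p N :: nat
  assumes p: "p \<ge> 1"
  shows "{d \<in> {1..p * N}. p dvd d} = (\<lambda>j. p * j) ` {1..N}"
proof (rule set_eqI, rule iffI)
  fix d assume "d \<in> {d \<in> {1..p * N}. p dvd d}"
  then obtain j where j: "d = p * j" "1 \<le> p * j" "p * j \<le> p * N" by auto
  have "j \<le> N" using j(3) p by simp
  moreover have "1 \<le> j" using j(2) by (cases j) auto
 ultimately show "d \<in> (\<lambda>j. p * j) ` {1..N}" using j by auto
next
  fix d assume "d \<in> (\<lambda>j. p * j) ` {1..N}"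
  then obtain j where "d = p * j" "j \<in> {1..N}" by (rule imageE)
  then have j: "d = p * j" "1 \<le> j" "j \<le> N" by simp_all
  then have "1 \<le> p * j" using p by simp
  moreover have "p * j \<le> p * N" using j by simp
  ultimately show "d \<in> {d \<in> {1..p * N}. p dvd d}" using j by auto
qed

lemma img_cong1:
  fixes q N :: nat
  assumes q: "q \<ge> 1" and N: "N \<ge> 1"
  shows "{d \<in> {1..N * q}. q dvd (d - 1)} = (\<lambda>m. 1 + (m - 1) * q) ` {1..N}"
proof (rule set_eqI, rule iffI)
  fix d assume "d \<in> {d \<in> {1..N * q}. q dvd (d - 1)}"
  then obtain c where c: "d - 1 = q * c" "1 \<le> d" "d \<le> N * q" by (auto elim: dvdE)
  then have "c * q < N * q" by (metis Suc_diff_1 Suc_le_lessD mult.commute nat_less_le order.strict_trans1 le_less_Suc_eq not_less_eq_eq diff_less zero_less_one)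
  then have "c < N" using q by simp
  then show "d \<in> (\<lambda>m. 1 + (m - 1) * q) ` {1..N}" using c
    by (intro image_eqI[of _ _ "Suc c"]) (auto simp: mult.commute)
next
  fix d assume "d \<in> (\<lambda>m. 1 + (m - 1) * q) ` {1..N}"
  then obtain m where "d = 1 + (m - 1) * q" "m \<in> {1..N}" by (rule imageE)
  then have m: "d = 1 + (m - 1) * q" "1 \<le> m" "m \<le> N" by simp_all
  obtain m' where m': "m = Suc m'" using m by (cases m) auto
  obtain N' where N': "N = Suc N'" using N by (cases N) auto
  have a: "m' * q \<le> N' * q" using m m' N' by simp
  have b: "N * q = q + N' * q" using N' by simp
  have "1 + m' * q \<le> N * q" using a b q by linarith
  then show "d \<in> {d \<in> {1..N * q}. q dvd (d - 1)}" using m m' by simp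
qed


theorem mainTheorem4:
  fixes p t k :: nat
  assumes "prime p" and "t \<ge> 1" and "1 \<le> k" and "k \<le> p ^ t"
  shows "int (Mbar k (p ^ t)) =
           (\<Sum>j=1..p ^ t. int (f k (p ^ t div j)))
         - (\<Sum>j=1..p ^ (t - 1). int (f k (p ^ (t - 1) div j)))
         + int (p - 1) * (\<Sum>s=1..t. int (p ^ (s - 1)) *
              (\<Sum>m=1..p ^ (t - s). int (f k (p ^ t div (1 + (m - 1) * p ^ s)))))"
proof -
  note p = assms(1) and t = assms(2) and k = assms(3)
  define n where "n = p ^ t"
  define F where "F d = int (f k (n div d))" for d
  define h where "h d = (if coprime d n then gcd (d - 1) n else 0)" for d
  define S where "S = {A. A \<subseteq> {1..n} \<and> card A = k}"
  have p1: "p \<ge> 1" using p prime_ge_1_nat by blast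
  have finS: "finite S" unfolding S_def by (rule finite_subset[of _ "Pow {1..n}"]) auto
  have "Mbar k n = (\<Sum>A\<in>{A \<in> S. coprime (Gcd A) n}. gcd (Gcd A - 1) n)"
    unfolding Mbar_def S_def by (rule sum.cong) auto
  also have "\<dots> = (\<Sum>A\<in>S. h (Gcd A))"
    unfolding h_def by (rule sum.inter_filter[OF finS])
  finally have "int (Mbar k n) = (\<Sum>A\<in>S. int (h (Gcd A)))" by simp
  also have "\<dots> = (\<Sum>d=1..n. int (h d) * F d)"
    unfolding S_def F_def by (rule sum_by_gcd[OF k])
  also have "\<dots> = (\<Sum>d=1..n. (if p dvd d then 0 else F d) + int (p - 1) *
      (\<Sum>s=1..t. int (p ^ (s - 1)) * (if p ^ s dvd (d - 1) then F d else 0)))"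
  proof (rule sum.cong[OF refl])
    fix d assume "d \<in> {1..n}"
    then have d: "d \<ge> 1" by simp
    have "int (h d) = (if p dvd d then 0 else 1) + int (p - 1) * (\<Sum>s=1..t. int (p ^ (s - 1)) * (if p ^ s dvd (d - 1) then 1 else 0))"
      unfolding h_def n_def by (rule h_decomp[OF p t d])
    then show "int (h d) * F d = (if p dvd d then 0 else F d) + int (p - 1) *
      (\<Sum>s=1..t. int (p ^ (s - 1)) * (if p ^ s dvd (d - 1) then F d else 0))"
    proof -
      have "(\<Sum>s=1..t. int (p ^ (s - 1)) * (if p ^ s dvd (d - 1) then 1 else 0)) * F d
         = (\<Sum>s=1..t. int (p ^ (s - 1)) * (if p ^ s dvd (d - 1) then F d else 0))"
        unfolding sum_distrib_right by (rule sum.cong) auto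
      then show ?thesis unfolding \<open>int (h d) = _\<close> by (simp add: ring_distribs mult.assoc)
    qed
  qed
  also have "\<dots> = (\<Sum>d=1..n. (if p dvd d then 0 else F d)) + int (p - 1) *
      (\<Sum>s=1..t. int (p ^ (s - 1)) * (\<Sum>d=1..n. (if p ^ s dvd (d - 1) then F d else 0)))"
    by (simp add: sum.distrib sum_distrib_left mult.assoc) (rule sum.swap)
  also have "(\<Sum>d=1..n. (if p dvd d then 0 else F d)) = (\<Sum>d=1..n. F d) - (\<Sum>d=1..n. (if p dvd d then F d else 0))"
    unfolding sum_subtractf[symmetric] by (rule sum.cong) auto
  also have "(\<Sum>d=1..n. (if p dvd d then F d else 0)) = (\<Sum>j=1..p ^ (t - 1). int (f k (p ^ (t - 1) div j)))"
  proof -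
    have nn: "n = p * p ^ (t - 1)" unfolding n_def using t by (metis power_eq_if not_one_le_zero)
    have "(\<Sum>d=1..n. (if p dvd d then F d else 0)) = (\<Sum>d\<in>{d \<in> {1..n}. p dvd d}. F d)"
      by (rule sum.inter_filter[symmetric]) simp
    also have "\<dots> = (\<Sum>d\<in>(\<lambda>j. p * j) ` {1..p ^ (t - 1)}. F d)"
      unfolding nn by (simp only: img_mult[OF p1])
    also have "\<dots> = (\<Sum>j=1..p ^ (t - 1). F (p * j))"
      using p1 by (subst sum.reindex) (auto simp: inj_on_def)
    also have "\<dots> = (\<Sum>j=1..p ^ (t - 1). int (f k (p ^ (t - 1) div j)))"
    proof (rule sum.cong[OF refl])
      fix j
      have "n div (p * j) = n div p div j" by (simp add: div_mult2_eq)
      also have "n div p = p ^ (t - 1)" unfolding nn using p1 by simp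
      finally show "F (p * j) = int (f k (p ^ (t - 1) div j))" unfolding F_def by simp
    qed
    finally show ?thesis .
  qed
  also have "(\<Sum>s=1..t. int (p ^ (s - 1)) * (\<Sum>d=1..n. (if p ^ s dvd (d - 1) then F d else 0)))
      = (\<Sum>s=1..t. int (p ^ (s - 1)) * (\<Sum>m=1..p ^ (t - s). int (f k (p ^ t div (1 + (m - 1) * p ^ s)))))"
  proof (rule sum.cong[OF refl])
    fix s assume "s \<in> {1..t}"
    then have s: "1 \<le> s" "s \<le> t" by auto
    have q1: "p ^ s \<ge> 1" using p1 by simp
    have N1: "p ^ (t - s) \<ge> 1" using p1 by simp
    have nn: "n = p ^ (t - s) * p ^ s" unfolding n_def using s by (simp add: power_add[symmetric])
    have "(\<Sum>d=1..n. (if p ^ s dvd (d - 1) then F d else 0)) = (\<Sum>d\<in>{d \<in> {1..n}. p ^ s dvd (d - 1)}. F d)"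
      by (rule sum.inter_filter[symmetric]) simp
    also have "\<dots> = (\<Sum>d\<in>(\<lambda>m. 1 + (m - 1) * p ^ s) ` {1..p ^ (t - s)}. F d)"
      unfolding nn by (simp only: img_cong1[OF q1 N1])
    also have "\<dots> = (\<Sum>m=1..p ^ (t - s). F (1 + (m - 1) * p ^ s))"
    proof (rule sum.reindex_cong[OF _ refl refl])
      show "inj_on (\<lambda>m. 1 + (m - 1) * p ^ s) {1..p ^ (t - s)}"
      proof (rule inj_onI)
        fix x y assume x: "x \<in> {1..p ^ (t - s)}" and y: "y \<in> {1..p ^ (t - s)}"
          and e: "1 + (x - 1) * p ^ s = 1 + (y - 1) * p ^ s"
        then have "x - 1 = y - 1" using p1 s by simp
        then show "x = y" using x y by auto
      qed
    qed
    also have "\<dots> = (\<Sum>m=1..p ^ (t - s). int (f k (p ^ t div (1 + (m - 1) * p ^ s))))"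
      unfolding F_def n_def ..
    finally show "int (p ^ (s - 1)) * (\<Sum>d=1..n. (if p ^ s dvd (d - 1) then F d else 0))
      = int (p ^ (s - 1)) * (\<Sum>m=1..p ^ (t - s). int (f k (p ^ t div (1 + (m - 1) * p ^ s))))" by simp
  qed
  finally show ?thesis unfolding n_def F_def by simp
qed

end
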